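(* Let $\Theta$ and $U$ be compact metric spaces, $\rho:\Theta\to L_1(\mathcal{H})$ a quantum statistical model, and $f:\Theta\times U\to[0,\infty)$ continuous. Put $\kappa_u(\theta):=f(\theta,u)\rho(\theta)$. Then for every $\epsilon>0$ and every compact $K\subseteq\Theta$ there exist a trace-class operator $W$ and $\delta>0$ such that $$-W\le\kappa_u(\theta)-\kappa_u(\eta)\le W\quad\text{for all }(\theta,\eta)\in K_\delta\text{ and all }u\in U,$$ and $\mathrm{Tr}\,W\le\epsilon$.
   Context: $\mathcal{H}$ is a Hilbert space, $L_1(\mathcal{H})$ its trace-class operators; for self-adjoint operators $A\ge B$ means $A-B$ is positive. With $d$ the metric on $\Theta$, for compact $K\subseteq\Theta$ and $\delta>0$ let $K_\delta:=\{(\theta,\eta)\in K\times K: d(\theta,\eta)<\delta\}$. For $T:\Theta\to L_1(\mathcal{H})$ with self-adjoint values, $\omega_T(K_\delta):=\inf\{\|X\|_1: X\in L_1(\mathcal{H}),\ -X\le T(\theta)-T(\eta)\le X\ \forall(\theta,\eta)\in K_\delta\}$, and $T$ is regular if $\lim_{\delta\to0}\omega_T(K_\delta)=0$ for every compact $K$. A quantum statistical model is a map $\rho:\Theta\to L_1(\mathcal{H})$ with $\rho(\theta)\ge0$, $\mathrm{Tr}\,\rho(\theta)=1$, which is injective and regular. *)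

theory Defs
  imports "HOL-Analysis.Analysis"
begin

text \<open>The Hilbert space H is modelled concretely as l2(I) for an index type 'i
  (every Hilbert space is unitarily isomorphic to some l2(I)).  Vectors are
  functions 'i => complex; operators are maps on such functions, of which only the
  restriction to l2 vectors matters.\<close>

definition l2_vec :: "('i \<Rightarrow> complex) \<Rightarrow> bool" where
  "l2_vec v \<longleftrightarrow> (\<lambda>i. (cmod (v i))^2) summable_on UNIV"

definition l2_inner :: "('i \<Rightarrow> complex) \<Rightarrow> ('i \<Rightarrow> complex) \<Rightarrow> complex" where
  "l2_inner v w = infsum (\<lambda>i. cnj (v i) * w i) UNIV"

definition l2_norm :: "('i \<Rightarrow> complex) \<Rightarrow> real" where
  "l2_norm v = sqrt (infsum (\<lambda>i. (cmod (v i))^2) UNIV)"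

type_synonym 'i op = "('i \<Rightarrow> complex) \<Rightarrow> ('i \<Rightarrow> complex)"

definition bounded_op :: "'i op \<Rightarrow> bool" where
  "bounded_op T \<longleftrightarrow>
     (\<forall>v. l2_vec v \<longrightarrow> l2_vec (T v)) \<and>
     (\<forall>v w a b. l2_vec v \<longrightarrow> l2_vec w \<longrightarrow>
        T (\<lambda>i. a * v i + b * w i) = (\<lambda>i. a * T v i + b * T w i)) \<and>
     (\<exists>C. \<forall>v. l2_vec v \<longrightarrow> l2_norm (T v) \<le> C * l2_norm v)"

definition op_minus :: "'i op \<Rightarrow> 'i op \<Rightarrow> 'i op" where
  "op_minus A B = (\<lambda>v i. A v i - B v i)"

definition op_uminus :: "'i op \<Rightarrow> 'i op" where
  "op_uminus A = (\<lambda>v i. - A v i)"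

definition op_scale :: "real \<Rightarrow> 'i op \<Rightarrow> 'i op" where
  "op_scale c A = (\<lambda>v i. complex_of_real c * A v i)"

text \<open>Positive (bounded) operator: <v, T v> is real and nonnegative
  (on a complex Hilbert space this entails self-adjointness).\<close>
definition positive_op :: "'i op \<Rightarrow> bool" where
  "positive_op T \<longleftrightarrow> bounded_op T \<and>
     (\<forall>v. l2_vec v \<longrightarrow> l2_inner v (T v) \<in> \<real> \<and> 0 \<le> Re (l2_inner v (T v)))"

definition op_le :: "'i op \<Rightarrow> 'i op \<Rightarrow> bool" where
  "op_le A B \<longleftrightarrow> positive_op (op_minus B A)"

definition orthonormal_on :: "nat set \<Rightarrow> (nat \<Rightarrow> 'i \<Rightarrow> complex) \<Rightarrow> bool" where
  "orthonormal_on F e \<longleftrightarrow> (\<forall>k\<in>F. l2_vec (e k)) \<and>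
     (\<forall>k\<in>F. \<forall>l\<in>F. l2_inner (e k) (e l) = (if k = l then 1 else 0))"

text \<open>Trace norm: ||T||_1 = sup over orthonormal families (e_k), (f_k) of
  sum_k |<f_k, T e_k>| (finite families suffice for the supremum).\<close>
definition tn_sums :: "'i op \<Rightarrow> real set" where
  "tn_sums T = {\<Sum>k\<in>F. cmod (l2_inner (f k) (T (e k))) | F e f.
                 finite F \<and> orthonormal_on F e \<and> orthonormal_on F f}"

definition trace_class :: "'i op \<Rightarrow> bool" where
  "trace_class T \<longleftrightarrow> bounded_op T \<and> bdd_above (tn_sums T)"

definition trace_norm :: "'i op \<Rightarrow> real" where
  "trace_norm T = Sup (tn_sums T)"

definition ket :: "'i \<Rightarrow> 'i \<Rightarrow> complex" where
  "ket i = (\<lambda>j. if j = i then 1 else 0)"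

definition trace :: "'i op \<Rightarrow> complex" where
  "trace T = infsum (\<lambda>i. l2_inner (ket i) (T (ket i))) UNIV"

definition Kdelta :: "'a::metric_space set \<Rightarrow> real \<Rightarrow> ('a \<times> 'a) set" where
  "Kdelta K \<delta> = {(\<theta>, \<eta>). \<theta> \<in> K \<and> \<eta> \<in> K \<and> dist \<theta> \<eta> < \<delta>}"

text \<open>omega_T(K_delta); the infimum of the empty set is +infinity.\<close>
definition omega :: "('a::metric_space \<Rightarrow> 'i op) \<Rightarrow> 'a set \<Rightarrow> real \<Rightarrow> ereal" where
  "omega T K \<delta> = Inf ((\<lambda>X. ereal (trace_norm X)) `
     {X. trace_class X \<and>
         (\<forall>(\<theta>, \<eta>) \<in> Kdelta K \<delta>.
            op_le (op_uminus X) (op_minus (T \<theta>) (T \<eta>)) \<and>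
            op_le (op_minus (T \<theta>) (T \<eta>)) X)})"

definition regular :: "'a::metric_space set \<Rightarrow> ('a \<Rightarrow> 'i op) \<Rightarrow> bool" where
  "regular \<Theta> T \<longleftrightarrow> (\<forall>K. K \<subseteq> \<Theta> \<longrightarrow> compact K \<longrightarrow>
      ((\<lambda>\<delta>. omega T K \<delta>) \<longlongrightarrow> 0) (at_right 0))"

definition quantum_statistical_model :: "'a::metric_space set \<Rightarrow> ('a \<Rightarrow> 'i op) \<Rightarrow> bool" where
  "quantum_statistical_model \<Theta> \<rho> \<longleftrightarrow>
     (\<forall>\<theta>\<in>\<Theta>. trace_class (\<rho> \<theta>) \<and> positive_op (\<rho> \<theta>) \<and> trace (\<rho> \<theta>) = 1) \<and>
     (\<forall>\<theta>\<in>\<Theta>. \<forall>\<eta>\<in>\<Theta>. \<theta> \<noteq> \<eta> \<longrightarrow> (\<exists>v. l2_vec v \<and> \<rho> \<theta> v \<noteq> \<rho> \<eta> v)) \<and>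
     regular \<Theta> \<rho>"

end

theory Submission
  imports Defs
begin


lemma sq2: fixes p q :: real shows "(p+q)^2 \<le> 2*p^2+2*q^2"
proof -
  have "0 \<le> (p-q)^2" by simp
  thus ?thesis unfolding power2_eq_square by (simp add: algebra_simps)
qed

lemma pq_le: fixes p q :: real assumes "p \<ge> 0" "q \<ge> 0" shows "p*q \<le> p^2+q^2"
proof -
  have "0 \<le> (p-q)^2" "0 \<le> p*q" using assms by simp_all
  thus ?thesis unfolding power2_eq_square by (simp add: algebra_simps)
qed

lemma sq_lin_bound:
  fixes a b x y :: complex
  shows "(cmod (a*x + b*y))^2 \<le> 2*(cmod a)^2*(cmod x)^2 + 2*(cmod b)^2*(cmod y)^2"
proof -
  have "cmod (a*x+b*y) \<le> cmod a * cmod x + cmod b * cmod y"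
    by (metis norm_mult norm_triangle_ineq)
  hence "(cmod (a*x+b*y))^2 \<le> (cmod a * cmod x + cmod b * cmod y)^2"
    by (simp add: power_mono)
  also have "\<dots> \<le> 2*(cmod a)^2*(cmod x)^2 + 2*(cmod b)^2*(cmod y)^2"
    using sq2[of "cmod a * cmod x" "cmod b * cmod y"] by (simp add: power_mult_distrib)
  finally show ?thesis .
qed

lemma l2_vec_lin:
  assumes "l2_vec v" "l2_vec w"
  shows "l2_vec (\<lambda>i. a * v i + b * w i)"
proof -
  have s: "(\<lambda>i. 2*(cmod a)^2*(cmod (v i))^2 + 2*(cmod b)^2*(cmod (w i))^2) summable_on UNIV"
    using assms unfolding l2_vec_def
    by (intro summable_on_add summable_on_cmult_right) auto
  show ?thesis unfolding l2_vec_def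
    by (rule summable_on_comparison_test[OF s]) (auto intro: sq_lin_bound)
qed

lemma l2_inner_summable:
  assumes "l2_vec v" "l2_vec w"
  shows "(\<lambda>i. cnj (v i) * w i) summable_on UNIV"
proof -
  have s: "(\<lambda>i. ((cmod (v i))^2 + (cmod (w i))^2)) summable_on UNIV"
    using assms unfolding l2_vec_def
    by (intro summable_on_add) auto
  have "(\<lambda>i. norm (cnj (v i) * w i)) summable_on UNIV"
  proof (rule summable_on_comparison_test[OF s])
    fix i
    show "norm (cnj (v i) * w i) \<le> ((cmod (v i))^2 + (cmod (w i))^2)"
      by (simp add: norm_mult) (rule pq_le; simp)
  qed auto
  thus ?thesis by (simp add: abs_summable_summable)
qed

lemma l2_inner_lin:
  assumes "l2_vec v" "l2_vec w1" "l2_vec w2"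
  shows "l2_inner v (\<lambda>i. a * w1 i + b * w2 i) = a * l2_inner v w1 + b * l2_inner v w2"
proof -
  have e: "(\<lambda>i. cnj (v i) * (a * w1 i + b * w2 i)) = (\<lambda>i. a * (cnj (v i) * w1 i) + b * (cnj (v i) * w2 i))"
    by (auto simp: algebra_simps)
  show ?thesis unfolding l2_inner_def e
    using l2_inner_summable[OF assms(1,2)] l2_inner_summable[OF assms(1,3)]
    by (simp add: infsum_add summable_on_cmult_right infsum_cmult_right)
qed

lemma l2_norm_sq: "l2_vec v \<Longrightarrow> (l2_norm v)^2 = infsum (\<lambda>i. (cmod (v i))^2) UNIV"
  unfolding l2_norm_def by (simp add: infsum_nonneg)

lemma l2_norm_nonneg: "l2_norm v \<ge> 0"
  unfolding l2_norm_def by (simp add: infsum_nonneg)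

lemma l2_norm_lin:
  assumes "l2_vec v" "l2_vec w"
  shows "l2_norm (\<lambda>i. a * v i + b * w i) \<le> 2 * (cmod a * l2_norm v + cmod b * l2_norm w)"
proof -
  have "(l2_norm (\<lambda>i. a * v i + b * w i))^2 = infsum (\<lambda>i. (cmod (a * v i + b * w i))^2) UNIV"
    by (rule l2_norm_sq[OF l2_vec_lin[OF assms]])
  also have "\<dots> \<le> infsum (\<lambda>i. 2*(cmod a)^2*(cmod (v i))^2 + 2*(cmod b)^2*(cmod (w i))^2) UNIV"
    using assms l2_vec_lin[OF assms, of a b] unfolding l2_vec_def
    by (intro infsum_mono summable_on_add summable_on_cmult_right) (auto intro: sq_lin_bound)
  also have "\<dots> = 2*(cmod a)^2*(l2_norm v)^2 + 2*(cmod b)^2*(l2_norm w)^2"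
    using assms unfolding l2_vec_def
    by (simp add: infsum_add summable_on_cmult_right infsum_cmult_right l2_norm_sq[OF assms(1)]
       l2_norm_sq[OF assms(2)] l2_vec_def)
  also have "\<dots> \<le> (2 * (cmod a * l2_norm v + cmod b * l2_norm w))^2"
    using l2_norm_nonneg[of v] l2_norm_nonneg[of w]
    by (simp add: power2_eq_square algebra_simps)
  finally show ?thesis
    by (rule power2_le_imp_le) (use l2_norm_nonneg[of v] l2_norm_nonneg[of w] in simp)
qed



definition lc :: "complex \<Rightarrow> 'i op \<Rightarrow> complex \<Rightarrow> 'i op \<Rightarrow> 'i op" where
  "lc a A b B = (\<lambda>v i. a * A v i + b * B v i)"

lemma bounded_lc[simp]:
  assumes "bounded_op A" "bounded_op B"
  shows "bounded_op (lc a A b B)"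
proof -
  obtain CA where CA: "\<And>v. l2_vec v \<Longrightarrow> l2_norm (A v) \<le> CA * l2_norm v"
    using assms(1) unfolding bounded_op_def by blast
  obtain CB where CB: "\<And>v. l2_vec v \<Longrightarrow> l2_norm (B v) \<le> CB * l2_norm v"
    using assms(2) unfolding bounded_op_def by blast
  have l2A: "\<And>v. l2_vec v \<Longrightarrow> l2_vec (A v)" and l2B: "\<And>v. l2_vec v \<Longrightarrow> l2_vec (B v)"
    using assms unfolding bounded_op_def by blast+
  have linA: "\<And>v w c d. l2_vec v \<Longrightarrow> l2_vec w \<Longrightarrow>
        A (\<lambda>i. c * v i + d * w i) = (\<lambda>i. c * A v i + d * A w i)"
    using assms(1) unfolding bounded_op_def by blast
  have linB: "\<And>v w c d. l2_vec v \<Longrightarrow> l2_vec w \<Longrightarrow>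
        B (\<lambda>i. c * v i + d * w i) = (\<lambda>i. c * B v i + d * B w i)"
    using assms(2) unfolding bounded_op_def by blast
  have 1: "\<forall>v. l2_vec v \<longrightarrow> l2_vec (lc a A b B v)"
    unfolding lc_def using l2A l2B l2_vec_lin by blast
  have 2: "\<forall>v w c d. l2_vec v \<longrightarrow> l2_vec w \<longrightarrow>
        lc a A b B (\<lambda>i. c * v i + d * w i) = (\<lambda>i. c * lc a A b B v i + d * lc a A b B w i)"
    unfolding lc_def by (auto simp: linA linB algebra_simps)
  have 3: "\<forall>v. l2_vec v \<longrightarrow> l2_norm (lc a A b B v) \<le> (2 * (cmod a * CA + cmod b * CB)) * l2_norm v"
  proof (intro allI impI)
    fix v :: "'a \<Rightarrow> complex" assume v: "l2_vec v"
    have "l2_norm (lc a A b B v) \<le> 2 * (cmod a * l2_norm (A v) + cmod b * l2_norm (B v))"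
      unfolding lc_def using l2_norm_lin[OF l2A[OF v] l2B[OF v]] by simp
    also have "\<dots> \<le> 2 * (cmod a * (CA * l2_norm v) + cmod b * (CB * l2_norm v))"
      using CA[OF v] CB[OF v] by (intro mult_left_mono add_mono) auto
    finally show "l2_norm (lc a A b B v) \<le> (2 * (cmod a * CA + cmod b * CB)) * l2_norm v"
      by (simp add: algebra_simps)
  qed
  show ?thesis unfolding bounded_op_def using 1 2 3 by blast
qed

lemma bounded_l2: "bounded_op A \<Longrightarrow> l2_vec v \<Longrightarrow> l2_vec (A v)"
  unfolding bounded_op_def by blast

lemma q_lc[simp]:
  assumes "l2_vec v" "bounded_op A" "bounded_op B"
  shows "l2_inner v (lc a A b B v) = a * l2_inner v (A v) + b * l2_inner v (B v)"
  unfolding lc_def using l2_inner_lin[OF assms(1) bounded_l2[OF assms(2,1)] bounded_l2[OF assms(3,1)]] .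

lemma inner_lc:
  assumes "l2_vec v" "l2_vec w" "bounded_op A" "bounded_op B"
  shows "l2_inner v (lc a A b B w) = a * l2_inner v (A w) + b * l2_inner v (B w)"
  unfolding lc_def using l2_inner_lin[OF assms(1) bounded_l2[OF assms(3,2)] bounded_l2[OF assms(4,2)]] .

lemma trace_class_lc[simp]:
  assumes "trace_class A" "trace_class B"
  shows "trace_class (lc a A b B)"
proof -
  have bA: "bounded_op A" and bB: "bounded_op B" using assms unfolding trace_class_def by auto
  have "\<forall>s\<in>tn_sums (lc a A b B). s \<le> cmod a * Sup (tn_sums A) + cmod b * Sup (tn_sums B)"
  proof
    fix s assume "s \<in> tn_sums (lc a A b B)"
    then obtain F e f where s: "s = (\<Sum>k\<in>F. cmod (l2_inner (f k) (lc a A b B (e k))))"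
      and F: "finite F" "orthonormal_on F e" "orthonormal_on F f" unfolding tn_sums_def by blast
    have sA: "(\<Sum>k\<in>F. cmod (l2_inner (f k) (A (e k)))) \<in> tn_sums A"
      unfolding tn_sums_def using F by blast
    have sB: "(\<Sum>k\<in>F. cmod (l2_inner (f k) (B (e k)))) \<in> tn_sums B"
      unfolding tn_sums_def using F by blast
    have "s = (\<Sum>k\<in>F. cmod (a * l2_inner (f k) (A (e k)) + b * l2_inner (f k) (B (e k))))"
      unfolding s using F unfolding orthonormal_on_def
      by (intro sum.cong refl) (simp add: inner_lc bA bB)
    also have "\<dots> \<le> (\<Sum>k\<in>F. cmod a * cmod (l2_inner (f k) (A (e k))) + cmod b * cmod (l2_inner (f k) (B (e k))))"
      by (intro sum_mono) (metis norm_mult norm_triangle_ineq)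
    also have "\<dots> = cmod a * (\<Sum>k\<in>F. cmod (l2_inner (f k) (A (e k)))) + cmod b * (\<Sum>k\<in>F. cmod (l2_inner (f k) (B (e k))))"
      by (simp add: sum.distrib sum_distrib_left)
    also have "\<dots> \<le> cmod a * Sup (tn_sums A) + cmod b * Sup (tn_sums B)"
      using assms sA sB unfolding trace_class_def
      by (intro add_mono mult_left_mono cSup_upper) auto
    finally show "s \<le> cmod a * Sup (tn_sums A) + cmod b * Sup (tn_sums B)" .
  qed
  thus ?thesis unfolding trace_class_def using bA bB by (auto intro: bdd_aboveI2)
qed

definition zop :: "'i op" where "zop = (\<lambda>v i. 0)"

lemma l2_vec_zero: "l2_vec (\<lambda>i. 0)" unfolding l2_vec_def by simp
lemma l2_inner_zero[simp]: "l2_inner v (\<lambda>i. 0) = 0" unfolding l2_inner_def by simp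

lemma trace_class_zop: "trace_class zop"
proof -
  have b: "bounded_op zop" unfolding bounded_op_def zop_def
    by (auto simp: l2_vec_zero l2_norm_def intro!: exI[of _ 0])
  have "tn_sums zop \<subseteq> {0}" unfolding tn_sums_def zop_def by auto
  hence "bdd_above (tn_sums zop)" by (meson bdd_above_empty bdd_above_insert bdd_above_mono)
  thus ?thesis using b unfolding trace_class_def by auto
qed

lemma trace_zop: "trace zop = 0" unfolding trace_def zop_def by simp




lemma infsum_single_pt:
  fixes g :: "'i \<Rightarrow> complex"
  assumes "\<And>j. j \<noteq> i \<Longrightarrow> g j = 0"
  shows "infsum g UNIV = g i" "g summable_on UNIV"
proof -
  have "(g has_sum g i) UNIV"
    by (rule has_sum_finite_neutralI[of "{i}"]) (use assms in auto)
  thus "infsum g UNIV = g i" "g summable_on UNIV" by (auto simp: infsumI summable_on_def)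
qed

lemma l2_vec_ket: "l2_vec (ket i)"
  unfolding l2_vec_def
  by (rule finite_nonzero_values_imp_summable_on) (rule finite_subset[of _ "{i}"], auto simp: ket_def)

lemma inner_ket[simp]: "l2_inner (ket i) w = w i"
  unfolding l2_inner_def using infsum_single_pt(1)[of i "\<lambda>ia. cnj (ket i ia) * w ia"] by (simp add: ket_def)

lemma ket_apply: "ket i j = (if j = i then 1 else 0)" by (simp add: ket_def)

lemma trace_diag: "trace A = infsum (\<lambda>i. A (ket i) i) UNIV"
  unfolding trace_def by simp

lemma trace_lc:
  assumes "(\<lambda>i. A (ket i) i) summable_on UNIV" "(\<lambda>i. B (ket i) i) summable_on UNIV"
  shows "trace (lc a A b B) = a * trace A + b * trace B"
    "(\<lambda>i. lc a A b B (ket i) i) summable_on UNIV"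
  unfolding trace_diag lc_def using assms
  by (simp_all add: infsum_add summable_on_add summable_on_cmult_right infsum_cmult_right)

lemma trace_one_summable:
  assumes "trace A = 1" shows "(\<lambda>i. A (ket i) i) summable_on UNIV"
  using assms infsum_not_exists unfolding trace_diag by fastforce

lemma trace_le_norm:
  assumes tc: "trace_class X" and pos: "\<And>i. X (ket i) i \<in> \<real> \<and> 0 \<le> Re (X (ket i) i)"
  shows "(\<lambda>i. X (ket i) i) summable_on UNIV" "trace X \<in> \<real>" "Re (trace X) \<le> trace_norm X"
proof -
  define g where "g i = Re (X (ket i) i)" for i
  have gX: "X (ket i) i = of_real (g i)" for i
    using pos[of i] unfolding g_def by (simp add: complex_is_Real_iff complex_eq_iff)
  have gnn: "g i \<ge> 0" for i using pos[of i] unfolding g_def by simp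
  have fin: "sum g F \<le> trace_norm X" if finF: "finite F" for F
  proof -
    obtain h where h: "bij_betw h {0..<card F} F" using ex_bij_betw_nat_finite[OF finF] by blast
    have inj: "inj_on h {0..<card F}" using h by (simp add: bij_betw_def)
    have on: "orthonormal_on {0..<card F} (\<lambda>k. ket (h k))"
      unfolding orthonormal_on_def using inj
      by (auto simp: l2_vec_ket ket_apply inj_on_eq_iff)
    have "(\<Sum>k\<in>{0..<card F}. cmod (l2_inner (ket (h k)) (X (ket (h k))))) \<in> tn_sums X"
      unfolding tn_sums_def mem_Collect_eq
      by (rule exI[of _ "{0..<card F}"], rule exI[of _ "\<lambda>k. ket (h k)"], rule exI[of _ "\<lambda>k. ket (h k)"])
         (use on in simp)
    hence "(\<Sum>k\<in>{0..<card F}. cmod (l2_inner (ket (h k)) (X (ket (h k))))) \<le> trace_norm X"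
      unfolding trace_norm_def using tc unfolding trace_class_def by (intro cSup_upper) auto
    moreover have "(\<Sum>k\<in>{0..<card F}. cmod (l2_inner (ket (h k)) (X (ket (h k))))) = (\<Sum>i\<in>F. cmod (X (ket i) i))"
      using sum.reindex_bij_betw[OF h, of "\<lambda>i. cmod (X (ket i) i)"] by simp
    moreover have "cmod (X (ket i) i) = g i" for i
      unfolding gX using gnn[of i] by simp
    ultimately show ?thesis by simp
  qed
  have gs: "g summable_on UNIV"
    by (rule nonneg_bdd_above_summable_on) (use gnn fin in \<open>auto intro!: bdd_aboveI2\<close>)
  show "(\<lambda>i. X (ket i) i) summable_on UNIV" unfolding gX using summable_on_of_real[OF gs] .
  have tr: "trace X = of_real (infsum g UNIV)"
    unfolding trace_diag gX by (rule infsumI, rule has_sum_of_real, rule has_sum_infsum, rule gs)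
  show "trace X \<in> \<real>" unfolding tr by simp
  show "Re (trace X) \<le> trace_norm X" unfolding tr using infsum_le_finite_sums[OF gs] fin by simp
qed



lemma op_minus_lc: "op_minus A B = lc 1 A (-1) B"
  unfolding op_minus_def lc_def by simp
lemma op_uminus_lc: "op_uminus A = lc (-1) A 0 A"
  unfolding op_uminus_def lc_def by simp
lemma op_scale_lc: "op_scale c A = lc (of_real c) A 0 A"
  unfolding op_scale_def lc_def by simp

lemma op_le_q:
  assumes "bounded_op A" "bounded_op B"
  shows "op_le A B \<longleftrightarrow> (\<forall>v. l2_vec v \<longrightarrow> l2_inner v (B v) - l2_inner v (A v) \<in> \<real> \<and>
            Re (l2_inner v (A v)) \<le> Re (l2_inner v (B v)))"
  unfolding op_le_def positive_op_def op_minus_lc using assms by auto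

lemma positive_q:
  assumes "positive_op A" "l2_vec v"
  obtains a where "l2_inner v (A v) = of_real a" "0 \<le> a"
  using assms unfolding positive_op_def by (metis Reals_cases Re_complex_of_real)

lemma Xbound:
  assumes "positive_op A" "positive_op B" "bounded_op X"
    "op_le (op_uminus X) (op_minus A B)" "op_le (op_minus A B) X" "l2_vec v"
  shows "\<exists>a b x. l2_inner v (A v) = of_real a \<and> l2_inner v (B v) = of_real b \<and>
      l2_inner v (X v) = of_real x \<and> \<bar>a - b\<bar> \<le> x \<and> 0 \<le> a \<and> 0 \<le> b"
proof -
  have bA: "bounded_op A" and bB: "bounded_op B" using assms(1,2) unfolding positive_op_def by auto
  obtain a where a: "l2_inner v (A v) = of_real a" "0 \<le> a" using positive_q[OF assms(1,6)] .
  obtain b where b: "l2_inner v (B v) = of_real b" "0 \<le> b" using positive_q[OF assms(2,6)] .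
  have 1: "l2_inner v (X v) - (of_real a - of_real b) \<in> \<real> \<and> Re (of_real a - of_real b) \<le> Re (l2_inner v (X v))"
    using assms(5) assms(6) unfolding op_le_q[OF bounded_lc[OF bA bB] assms(3)] op_minus_lc
    by (auto simp: bA bB a b)
  have 2: "of_real a - of_real b - (- l2_inner v (X v)) \<in> \<real> \<and> - Re (l2_inner v (X v)) \<le> Re (of_real a - of_real b)"
    using assms(4) assms(6) unfolding op_le_q[OF bounded_lc[OF assms(3) assms(3)] bounded_lc[OF bA bB]] op_minus_lc op_uminus_lc
    by (auto simp: bA bB a b assms(3))
  have "l2_inner v (X v) \<in> \<real>"
  proof -
    have "l2_inner v (X v) = (l2_inner v (X v) - (of_real a - of_real b)) + of_real (a - b)" by simp
    thus ?thesis using 1 by (metis Reals_add Reals_of_real)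
  qed
  then obtain x where x: "l2_inner v (X v) = of_real x" by (metis Reals_cases)
  show ?thesis using 1 2 a b x by (intro exI[of _ a] exI[of _ b] exI[of _ x]) auto
qed

lemma key_ineq:
  fixes ft fe M g r1 r2 x sj s :: real
  assumes "0 \<le> ft" "ft \<le> M" "\<bar>ft - fe\<bar> \<le> g" "0 \<le> r2" "\<bar>r1 - r2\<bar> \<le> x"
    "\<bar>sj - r2\<bar> \<le> x" "sj \<le> s"
  shows "\<bar>ft * r1 - fe * r2\<bar> \<le> (M + g) * x + g * s"
proof -
  have x0: "0 \<le> x" using assms(5) by linarith
  have e: "ft * r1 - fe * r2 = ft * (r1 - r2) + (ft - fe) * r2" by (simp add: algebra_simps)
  have 1: "\<bar>ft * (r1 - r2)\<bar> \<le> M * x"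
    using assms(1,2,5) x0 by (simp add: abs_mult mult_mono)
  have "\<bar>(ft - fe) * r2\<bar> \<le> g * r2" using assms(3,4) by (simp add: abs_mult mult_right_mono)
  also have "\<dots> \<le> g * (s + x)" using assms(3,4,6,7) by (intro mult_left_mono) auto
  finally have 2: "\<bar>(ft - fe) * r2\<bar> \<le> g * (s + x)" .
  have "\<bar>ft * (r1 - r2) + (ft - fe) * r2\<bar> \<le> \<bar>ft * (r1 - r2)\<bar> + \<bar>(ft - fe) * r2\<bar>"
    by (rule abs_triangle_ineq)
  thus ?thesis unfolding e using 1 2 by (simp add: algebra_simps)
qed

lemma final:
  assumes bA: "bounded_op A" and bB: "bounded_op B" and bX: "bounded_op X" and bS: "bounded_op S"
    and H: "\<forall>v. l2_vec v \<longrightarrow> (\<exists>a b x s. l2_inner v (A v) = of_real a \<and> l2_inner v (B v) = of_real b \<and>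
        l2_inner v (X v) = of_real x \<and> l2_inner v (S v) = of_real s \<and> abs (ft*a - fe*b) \<le> (M+g)*x + g * s)"
  shows "op_le (op_uminus (lc (of_real (M+g)) X (of_real g) S)) (op_minus (op_scale ft A) (op_scale fe B)) \<and>
         op_le (op_minus (op_scale ft A) (op_scale fe B)) (lc (of_real (M+g)) X (of_real g) S)"
proof -
  have bD: "bounded_op (op_minus (op_scale ft A) (op_scale fe B))" unfolding op_minus_lc op_scale_lc
    using bA bB by simp
  have bW: "bounded_op (lc (of_real (M+g)) X (of_real g) S)" using bX bS by simp
  have bW': "bounded_op (op_uminus (lc (of_real (M+g)) X (of_real g) S))" unfolding op_uminus_lc using bW by simp
  show ?thesis
    unfolding op_le_q[OF bW' bD] op_le_q[OF bD bW]
  proof (intro conjI allI impI)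
    fix v :: "'a \<Rightarrow> complex" assume v: "l2_vec v"
    obtain a b x s where r: "l2_inner v (A v) = of_real a" "l2_inner v (B v) = of_real b"
        "l2_inner v (X v) = of_real x" "l2_inner v (S v) = of_real s" and ie: "abs (ft*a - fe*b) \<le> (M+g)*x + g * s"
      using H v by blast
    have qD: "l2_inner v (op_minus (op_scale ft A) (op_scale fe B) v) = of_real (ft*a - fe*b)"
      unfolding op_minus_lc op_scale_lc using v bA bB by (simp add: r)
    have qW: "l2_inner v (lc (of_real (M+g)) X (of_real g) S v) = of_real ((M+g)*x + g * s)"
      using v bX bS by (simp add: r)
    have qW': "l2_inner v (op_uminus (lc (of_real (M+g)) X (of_real g) S) v) = of_real (-((M+g)*x + g * s))"
      unfolding op_uminus_lc using v bX bS by (simp add: r algebra_simps)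
    show "l2_inner v (op_minus (op_scale ft A) (op_scale fe B) v) -
          l2_inner v (op_uminus (lc (of_real (M + g)) X (of_real g) S) v) \<in> \<real>"
      unfolding qD qW' by (metis Reals_diff Reals_of_real)
    show "Re (l2_inner v (op_uminus (lc (of_real (M + g)) X (of_real g) S) v))
          \<le> Re (l2_inner v (op_minus (op_scale ft A) (op_scale fe B) v))"
      unfolding qD qW' using ie by simp
    show "l2_inner v (lc (of_real (M + g)) X (of_real g) S v) -
          l2_inner v (op_minus (op_scale ft A) (op_scale fe B) v) \<in> \<real>"
      unfolding qD qW by (metis Reals_diff Reals_of_real)
    show "Re (l2_inner v (op_minus (op_scale ft A) (op_scale fe B) v))
          \<le> Re (l2_inner v (lc (of_real (M + g)) X (of_real g) S v))"
      unfolding qD qW using ie by simp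
  qed
qed

lemma cover_sum:
  fixes \<rho> :: "'a \<Rightarrow> 'b op"
  assumes "finite C" "\<forall>\<eta>\<in>C. trace_class (\<rho> \<eta>) \<and> positive_op (\<rho> \<eta>) \<and> trace (\<rho> \<eta>) = 1"
  shows "\<exists>S. trace_class S \<and> (\<lambda>i. S (ket i) i) summable_on UNIV \<and> trace S = of_nat (card C) \<and>
     (\<forall>v. l2_vec v \<longrightarrow> l2_inner v (S v) \<in> \<real> \<and> 0 \<le> Re (l2_inner v (S v)) \<and>
        (\<forall>\<eta>\<in>C. Re (l2_inner v (\<rho> \<eta> v)) \<le> Re (l2_inner v (S v))))"
  using assms
proof (induction C rule: finite_induct)
  case empty
  have z1: "(\<lambda>i. zop (ket i) i) summable_on UNIV" and z2: "\<And>v. l2_inner v (zop v) = 0"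
    by (simp_all add: zop_def)
  show ?case
    by (rule exI[of _ zop]) (simp add: trace_class_zop trace_zop z1 z2)
next
  case (insert \<eta> C)
  then obtain S where S: "trace_class S" "(\<lambda>i. S (ket i) i) summable_on UNIV" "trace S = of_nat (card C)"
     "\<forall>v. l2_vec v \<longrightarrow> l2_inner v (S v) \<in> \<real> \<and> 0 \<le> Re (l2_inner v (S v)) \<and>
        (\<forall>\<eta>\<in>C. Re (l2_inner v (\<rho> \<eta> v)) \<le> Re (l2_inner v (S v)))" by auto
  have r: "trace_class (\<rho> \<eta>)" "positive_op (\<rho> \<eta>)" "trace (\<rho> \<eta>) = 1" using insert by auto
  have bS: "bounded_op S" and br: "bounded_op (\<rho> \<eta>)" using S(1) r(1) unfolding trace_class_def by auto
  have ds: "(\<lambda>i. \<rho> \<eta> (ket i) i) summable_on UNIV" using trace_one_summable[OF r(3)] .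
  show ?case
  proof (rule exI[of _ "lc 1 (\<rho> \<eta>) 1 S"], intro conjI allI impI)
    show "trace_class (lc 1 (\<rho> \<eta>) 1 S)" using r(1) S(1) by simp
    show "(\<lambda>i. lc 1 (\<rho> \<eta>) 1 S (ket i) i) summable_on UNIV" using trace_lc(2)[of "\<rho> \<eta>" S, OF ds S(2)] .
    show "trace (lc 1 (\<rho> \<eta>) 1 S) = of_nat (card (insert \<eta> C))"
      using trace_lc(1)[of "\<rho> \<eta>" S, OF ds S(2)] r(3) S(3) insert(1,2) by simp
  next
    fix v :: "'b \<Rightarrow> complex" assume v: "l2_vec v"
    obtain a where a: "l2_inner v (\<rho> \<eta> v) = of_real a" "0 \<le> a" using positive_q[OF r(2) v] .
    have q: "l2_inner v (lc 1 (\<rho> \<eta>) 1 S v) = of_real a + l2_inner v (S v)"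
      using v bS br a by simp
    show "l2_inner v (lc 1 (\<rho> \<eta>) 1 S v) \<in> \<real>" unfolding q using S(4) v by (metis Reals_add Reals_of_real)
    show "0 \<le> Re (l2_inner v (lc 1 (\<rho> \<eta>) 1 S v))" unfolding q using S(4) v a by simp
    show "\<forall>\<eta>'\<in>insert \<eta> C. Re (l2_inner v (\<rho> \<eta>' v)) \<le> Re (l2_inner v (lc 1 (\<rho> \<eta>) 1 S v))"
      unfolding q using S(4) v a by force
  qed
qed



theorem lemma4:
  fixes \<Theta> :: "'a::metric_space set" and U :: "'b::metric_space set"
    and \<rho> :: "'a \<Rightarrow> 'i op" and f :: "'a \<times> 'b \<Rightarrow> real"
    and \<epsilon> :: real and K :: "'a set"
  assumes "compact \<Theta>" and "compact U"
    and "quantum_statistical_model \<Theta> \<rho>"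
    and "continuous_on (\<Theta> \<times> U) f" and "\<forall>x\<in>\<Theta> \<times> U. 0 \<le> f x"
    and "\<epsilon> > 0" and "K \<subseteq> \<Theta>" and "compact K"
  shows "\<exists>W \<delta>. trace_class W \<and> \<delta> > 0 \<and>
    (\<forall>(\<theta>, \<eta>) \<in> Kdelta K \<delta>. \<forall>u\<in>U.
        op_le (op_uminus W) (op_minus (op_scale (f (\<theta>, u)) (\<rho> \<theta>)) (op_scale (f (\<eta>, u)) (\<rho> \<eta>))) \<and>
        op_le (op_minus (op_scale (f (\<theta>, u)) (\<rho> \<theta>)) (op_scale (f (\<eta>, u)) (\<rho> \<eta>))) W) \<and>
    trace W \<in> \<real> \<and> Re (trace W) \<le> \<epsilon>"
proof (cases "K = {}")
  case True
  show ?thesis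
  proof (rule exI[of _ zop], rule exI[of _ 1], intro conjI)
    have "Kdelta K 1 = {}" unfolding Kdelta_def True by simp
    thus "\<forall>(\<theta>, \<eta>) \<in> Kdelta K 1. \<forall>u\<in>U.
        op_le (op_uminus zop) (op_minus (op_scale (f (\<theta>, u)) (\<rho> \<theta>)) (op_scale (f (\<eta>, u)) (\<rho> \<eta>))) \<and>
        op_le (op_minus (op_scale (f (\<theta>, u)) (\<rho> \<theta>)) (op_scale (f (\<eta>, u)) (\<rho> \<eta>))) zop" by simp
    show "trace_class zop" by (rule trace_class_zop)
    show "(0::real) < 1" by simp
    show "trace zop \<in> \<real>" "Re (trace zop) \<le> \<epsilon>" using assms(6) by (simp_all add: trace_zop)
  qed
next
  case Kne: False
  note qsm = assms(3)[unfolded quantum_statistical_model_def]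
  have rho: "\<And>\<theta>. \<theta> \<in> \<Theta> \<Longrightarrow> trace_class (\<rho> \<theta>) \<and> positive_op (\<rho> \<theta>) \<and> trace (\<rho> \<theta>) = 1"
    using conjunct1[OF qsm] by (rule bspec)
  have "regular \<Theta> \<rho>" using conjunct2[OF conjunct2[OF qsm]] .
  hence reg: "((\<lambda>\<delta>. omega \<rho> K \<delta>) \<longlongrightarrow> 0) (at_right 0)"
    using assms(7,8) unfolding regular_def by simp
  have "compact (f ` (\<Theta> \<times> U))"
    by (rule compact_continuous_image[OF assms(4) compact_Times[OF assms(1,2)]])
  hence "bounded (f ` (\<Theta> \<times> U))" by (rule compact_imp_bounded)
  then obtain M0 where M0: "M0 > 0" "\<And>y. y \<in> f ` (\<Theta> \<times> U) \<Longrightarrow> norm y \<le> M0"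
    unfolding bounded_pos by blast
  define M where "M = M0"
  have M: "0 \<le> M" "\<And>x. x \<in> \<Theta> \<times> U \<Longrightarrow> f x \<le> M"
  proof -
    show "0 \<le> M" using M0 unfolding M_def by simp
    fix x assume "x \<in> \<Theta> \<times> U"
    hence "norm (f x) \<le> M0" using M0(2) by blast
    thus "f x \<le> M" unfolding M_def by simp
  qed
  define \<tau> where "\<tau> = \<epsilon> / (2 * (M + 1))"
  have \<tau>: "\<tau> > 0" unfolding \<tau>_def using assms(6) M by simp
  have "eventually (\<lambda>\<delta>. omega \<rho> K \<delta> < ereal \<tau>) (at_right 0)"
    using order_tendstoD(2)[OF reg] \<tau> by simp
  then obtain b where b: "b > 0" "\<And>\<delta>. 0 < \<delta> \<Longrightarrow> \<delta> < b \<Longrightarrow> omega \<rho> K \<delta> < ereal \<tau>"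
    unfolding eventually_at_right_field by auto
  define \<delta>1 where "\<delta>1 = b / 2"
  have \<delta>1: "\<delta>1 > 0" "omega \<rho> K \<delta>1 < ereal \<tau>" using b unfolding \<delta>1_def by auto
  then obtain X where X: "trace_class X" "trace_norm X < \<tau>"
    "\<forall>(\<theta>, \<eta>) \<in> Kdelta K \<delta>1.
            op_le (op_uminus X) (op_minus (\<rho> \<theta>) (\<rho> \<eta>)) \<and>
            op_le (op_minus (\<rho> \<theta>) (\<rho> \<eta>)) X"
  proof -
    have "\<exists>y\<in>(\<lambda>X. ereal (trace_norm X)) `
     {X. trace_class X \<and>
         (\<forall>(\<theta>, \<eta>) \<in> Kdelta K \<delta>1.
            op_le (op_uminus X) (op_minus (\<rho> \<theta>) (\<rho> \<eta>)) \<and>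
            op_le (op_minus (\<rho> \<theta>) (\<rho> \<eta>)) X)}. y < ereal \<tau>"
      using \<delta>1(2) unfolding omega_def by (simp only: Inf_less_iff)
    then obtain X0 where "trace_class X0 \<and>
         (\<forall>(\<theta>, \<eta>) \<in> Kdelta K \<delta>1.
            op_le (op_uminus X0) (op_minus (\<rho> \<theta>) (\<rho> \<eta>)) \<and>
            op_le (op_minus (\<rho> \<theta>) (\<rho> \<eta>)) X0)" "ereal (trace_norm X0) < ereal \<tau>"
      by blast
    thus ?thesis by (intro that[of X0]) simp_all
  qed
  have bX: "bounded_op X" using X(1) unfolding trace_class_def by auto
  have Xb: "\<exists>a b x. l2_inner v (\<rho> \<theta> v) = of_real a \<and> l2_inner v (\<rho> \<eta> v) = of_real b \<and>
      l2_inner v (X v) = of_real x \<and> \<bar>a - b\<bar> \<le> x \<and> 0 \<le> a \<and> 0 \<le> b"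
    if "\<theta> \<in> K" "\<eta> \<in> K" "dist \<theta> \<eta> < \<delta>1" "l2_vec v" for \<theta> \<eta> v
  proof (rule Xbound)
    show "positive_op (\<rho> \<theta>)" "positive_op (\<rho> \<eta>)" using rho that(1,2) assms(7) by auto
    show "bounded_op X" by (rule bX)
    show "op_le (op_uminus X) (op_minus (\<rho> \<theta>) (\<rho> \<eta>))" "op_le (op_minus (\<rho> \<theta>) (\<rho> \<eta>)) X"
      using X(3) that(1-3) unfolding Kdelta_def by auto
    show "l2_vec v" by (rule that(4))
  qed
  obtain \<theta>0 where \<theta>0: "\<theta>0 \<in> K" using Kne by auto
  have Xdiag: "X (ket i) i \<in> \<real> \<and> 0 \<le> Re (X (ket i) i)" for i
  proof -
    obtain a b x where "l2_inner (ket i) (X (ket i)) = of_real x" "\<bar>a - b\<bar> \<le> x"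
      using Xb[OF \<theta>0 \<theta>0 _ l2_vec_ket, of i] \<delta>1 by auto
    thus ?thesis by auto
  qed
  note Xtr = trace_le_norm[OF X(1) Xdiag]
  obtain C where C: "C \<subseteq> K" "finite C" "K \<subseteq> (\<Union>c\<in>C. ball c \<delta>1)"
  proof -
    have cov: "K \<subseteq> (\<Union>c\<in>K. ball c \<delta>1)" using \<delta>1(1) by auto
    show ?thesis by (rule compactE_image[OF assms(8), of K "\<lambda>c. ball c \<delta>1"]) (use cov that in auto)
  qed
  obtain S where S: "trace_class S" "(\<lambda>i. S (ket i) i) summable_on UNIV" "trace S = of_nat (card C)"
     "\<forall>v. l2_vec v \<longrightarrow> l2_inner v (S v) \<in> \<real> \<and> 0 \<le> Re (l2_inner v (S v)) \<and>
        (\<forall>\<eta>\<in>C. Re (l2_inner v (\<rho> \<eta> v)) \<le> Re (l2_inner v (S v)))"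
    using cover_sum[OF C(2), of \<rho>] rho C(1) assms(7) by blast
  have bS: "bounded_op S" using S(1) unfolding trace_class_def by auto
  define n where "n = card C"
  define \<gamma> where "\<gamma> = min 1 (\<epsilon> / (2 * (real n + 1)))"
  have \<gamma>: "0 < \<gamma>" "\<gamma> \<le> 1" "\<gamma> * real n \<le> \<epsilon> / 2"
  proof -
    show "0 < \<gamma>" "\<gamma> \<le> 1" unfolding \<gamma>_def using assms(6) by auto
    have "\<gamma> * real n \<le> \<epsilon> / (2 * (real n + 1)) * real n"
      unfolding \<gamma>_def by (intro mult_right_mono) auto
    also have "\<dots> \<le> \<epsilon> / 2" using assms(6) by (simp add: field_simps)
    finally show "\<gamma> * real n \<le> \<epsilon> / 2" .
  qed
  have "uniformly_continuous_on (\<Theta> \<times> U) f"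
    by (rule compact_uniformly_continuous[OF assms(4) compact_Times[OF assms(1,2)]])
  then obtain \<delta>2 where \<delta>2: "\<delta>2 > 0"
    "\<And>x x'. x \<in> \<Theta> \<times> U \<Longrightarrow> x' \<in> \<Theta> \<times> U \<Longrightarrow> dist x' x < \<delta>2 \<Longrightarrow> dist (f x') (f x) < \<gamma>"
  proof -
    from \<open>uniformly_continuous_on (\<Theta> \<times> U) f\<close> \<gamma>(1) have
      "\<exists>d>0. \<forall>x\<in>\<Theta> \<times> U. \<forall>x'\<in>\<Theta> \<times> U. dist x' x < d \<longrightarrow> dist (f x') (f x) < \<gamma>"
      unfolding uniformly_continuous_on_def by blast
    thus ?thesis using that by blast
  qed
  define W where "W = lc (of_real (M + \<gamma>)) X (of_real \<gamma>) S"
  define \<delta> where "\<delta> = min \<delta>1 \<delta>2"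
  show ?thesis
  proof (rule exI[of _ W], rule exI[of _ \<delta>], intro conjI)
    show "trace_class W" unfolding W_def using X(1) S(1) by simp
    show "\<delta> > 0" unfolding \<delta>_def using \<delta>1 \<delta>2 by simp
    have trW: "trace W = of_real ((M + \<gamma>) * Re (trace X) + \<gamma> * real n)"
      unfolding W_def trace_lc(1)[of X S, OF Xtr(1) S(2)] S(3) n_def
      using Xtr(2) by (simp add: complex_is_Real_iff complex_eq_iff)
    show "trace W \<in> \<real>" unfolding trW by simp
    have trX0: "0 \<le> Re (trace X)"
    proof -
      have "Re (trace X) = infsum (\<lambda>i. Re (X (ket i) i)) UNIV"
        unfolding trace_diag using infsum_Re[OF Xtr(1)] by simp
      also have "\<dots> \<ge> 0" using Xdiag by (intro infsum_nonneg) auto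
      finally show ?thesis .
    qed
    have "(M + \<gamma>) * Re (trace X) \<le> (M + 1) * \<tau>"
      using Xtr(3) X(2) M(1) \<gamma>(1,2) trX0
      by (intro mult_mono) auto
    also have "(M + 1) * \<tau> = \<epsilon> / 2" unfolding \<tau>_def using M(1) by (simp add: field_simps)
    finally show "Re (trace W) \<le> \<epsilon>" unfolding trW using \<gamma>(3) by simp
    have main: "op_le (op_uminus W) (op_minus (op_scale (f (\<theta>, u)) (\<rho> \<theta>)) (op_scale (f (\<eta>, u)) (\<rho> \<eta>))) \<and>
        op_le (op_minus (op_scale (f (\<theta>, u)) (\<rho> \<theta>)) (op_scale (f (\<eta>, u)) (\<rho> \<eta>))) W"
      if te: "(\<theta>, \<eta>) \<in> Kdelta K \<delta>" and u: "u \<in> U" for \<theta> \<eta> u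
    proof -
      have \<theta>: "\<theta> \<in> K" and \<eta>: "\<eta> \<in> K" and d1: "dist \<theta> \<eta> < \<delta>1" and d2: "dist \<theta> \<eta> < \<delta>2"
        using te unfolding Kdelta_def \<delta>_def by auto
      have \<theta>T: "\<theta> \<in> \<Theta>" and \<eta>T: "\<eta> \<in> \<Theta>" using \<theta> \<eta> assms(7) by auto
      have bA: "bounded_op (\<rho> \<theta>)" and bB: "bounded_op (\<rho> \<eta>)"
        using rho[OF \<theta>T] rho[OF \<eta>T] unfolding trace_class_def by auto
      have ft: "0 \<le> f (\<theta>, u)" "f (\<theta>, u) \<le> M" using assms(5) M(2) \<theta>T u by auto
      have "dist (f (\<theta>, u)) (f (\<eta>, u)) < \<gamma>"
        using \<delta>2(2)[of "(\<eta>, u)" "(\<theta>, u)"] \<theta>T \<eta>T u d2 by (simp add: dist_Pair_Pair)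
      hence fd: "\<bar>f (\<theta>, u) - f (\<eta>, u)\<bar> \<le> \<gamma>" by (simp add: dist_real_def)
      obtain c where c: "c \<in> C" "dist c \<eta> < \<delta>1" using C(3) \<eta> by auto
      have cK: "c \<in> K" using c C(1) by auto
      have H: "\<forall>v. l2_vec v \<longrightarrow> (\<exists>a b x s. l2_inner v (\<rho> \<theta> v) = of_real a \<and> l2_inner v (\<rho> \<eta> v) = of_real b \<and>
        l2_inner v (X v) = of_real x \<and> l2_inner v (S v) = of_real s \<and>
        abs (f (\<theta>, u) * a - f (\<eta>, u) * b) \<le> (M + \<gamma>) * x + \<gamma> * s)"
      proof (intro allI impI)
        fix v :: "'i \<Rightarrow> complex" assume v: "l2_vec v"
        obtain a b x where abx: "l2_inner v (\<rho> \<theta> v) = of_real a" "l2_inner v (\<rho> \<eta> v) = of_real b"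
          "l2_inner v (X v) = of_real x" "\<bar>a - b\<bar> \<le> x" "0 \<le> b"
          using Xb[OF \<theta> \<eta> d1 v] by auto
        obtain a' b' x' where abx': "l2_inner v (\<rho> c v) = of_real a'" "l2_inner v (\<rho> \<eta> v) = of_real b'"
          "l2_inner v (X v) = of_real x'" "\<bar>a' - b'\<bar> \<le> x'"
          using Xb[OF cK \<eta> c(2) v] by auto
        have bb: "b' = b" "x' = x" using abx abx' by auto
        obtain s where s: "l2_inner v (S v) = of_real s" using S(4) v by (metis Reals_cases)
        have as: "a' \<le> s" using S(4) v c(1) abx'(1) s by force
        have "abs (f (\<theta>, u) * a - f (\<eta>, u) * b) \<le> (M + \<gamma>) * x + \<gamma> * s"
          by (rule key_ineq[OF ft fd abx(5) abx(4) _ as]) (use abx'(4) bb in simp)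
        thus "\<exists>a b x s. l2_inner v (\<rho> \<theta> v) = of_real a \<and> l2_inner v (\<rho> \<eta> v) = of_real b \<and>
          l2_inner v (X v) = of_real x \<and> l2_inner v (S v) = of_real s \<and>
          abs (f (\<theta>, u) * a - f (\<eta>, u) * b) \<le> (M + \<gamma>) * x + \<gamma> * s"
          using abx s by blast
      qed
      show "op_le (op_uminus W) (op_minus (op_scale (f (\<theta>, u)) (\<rho> \<theta>)) (op_scale (f (\<eta>, u)) (\<rho> \<eta>))) \<and>
        op_le (op_minus (op_scale (f (\<theta>, u)) (\<rho> \<theta>)) (op_scale (f (\<eta>, u)) (\<rho> \<eta>))) W"
        unfolding W_def by (rule final[OF bA bB bX bS H])
    qed
    show "\<forall>(\<theta>, \<eta>) \<in> Kdelta K \<delta>. \<forall>u\<in>U.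
        op_le (op_uminus W) (op_minus (op_scale (f (\<theta>, u)) (\<rho> \<theta>)) (op_scale (f (\<eta>, u)) (\<rho> \<eta>))) \<and>
        op_le (op_minus (op_scale (f (\<theta>, u)) (\<rho> \<theta>)) (op_scale (f (\<eta>, u)) (\<rho> \<eta>))) W"
      using main by blast
  qed
qed

end
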